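(* Let $G\in\mathrm{PLT}$ and let $A,B$ be finitely generated subgroups of $G'$. Then there exists $g\in G$ such that $A^g$ and $B$ centralize each other (every element of $A^g$ commutes with every element of $B$).
   Context: $\mathrm{PLT}$ is the class of groups that act faithfully by piecewise linear orientation preserving self-homeomorphisms of $[0,1]$ (each differentiable except at finitely many points) with no common fixed point in $(0,1)$. $G'$ is the commutator subgroup, and $A^g=gAg^{-1}$. *)

theory Defs
  imports "HOL-Analysis.Analysis" "HOL-Algebra.Algebra"
begin

text \<open>An orientation-preserving piecewise linear homeomorphism of [0,1], extended
  by the identity outside [0,1] (so that composition is the group law).\<close>
definition PL_homeo :: "(real \<Rightarrow> real) \<Rightarrow> bool" where
  "PL_homeo f \<longleftrightarrow>
     (\<forall>x. x \<notin> {0..1} \<longrightarrow> f x = x) \<and>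
     f 0 = 0 \<and> f 1 = 1 \<and>
     strict_mono_on {0..1} f \<and>
     continuous_on {0..1} f \<and>
     (\<exists>S. finite S \<and> {0,1} \<subseteq> S \<and> S \<subseteq> {0..1} \<and>
        (\<forall>a\<in>S. \<forall>b\<in>S. a < b \<and> {a<..<b} \<inter> S = {} \<longrightarrow>
           (\<exists>m c. \<forall>x\<in>{a..b}. f x = m * x + c)))"

definition homeo_grp :: "(real \<Rightarrow> real) set \<Rightarrow> (real \<Rightarrow> real) monoid" where
  "homeo_grp G = \<lparr>carrier = G, mult = (\<circ>), one = id\<rparr>"

text \<open>G is a group in PLT: a group of PL orientation-preserving homeomorphisms
  of [0,1] (acting faithfully, being a group of maps) with no common fixed
  point in (0,1).\<close>
definition PLT_group :: "(real \<Rightarrow> real) set \<Rightarrow> bool" where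
  "PLT_group G \<longleftrightarrow>
     group (homeo_grp G) \<and> (\<forall>f\<in>G. PL_homeo f) \<and>
     (\<forall>t\<in>{0<..<1}. \<exists>g\<in>G. g t \<noteq> t)"

definition conj_set :: "(real \<Rightarrow> real) set \<Rightarrow> (real \<Rightarrow> real) set \<Rightarrow> (real \<Rightarrow> real) \<Rightarrow> (real \<Rightarrow> real) set" where
  "conj_set G A g = (\<lambda>a. g \<circ> a \<circ> inv\<^bsub>homeo_grp G\<^esub> g) ` A"

end

theory Submission
  imports Defs
begin

lemma grp_inv:
  assumes "group (homeo_grp G)" "g \<in> G"
  shows "inv\<^bsub>homeo_grp G\<^esub> g \<in> G" "g \<circ> inv\<^bsub>homeo_grp G\<^esub> g = id"
    "inv\<^bsub>homeo_grp G\<^esub> g \<circ> g = id"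
proof -
  interpret group "homeo_grp G" by fact
  have g: "g \<in> carrier (homeo_grp G)" using assms by (simp add: homeo_grp_def)
  show "inv\<^bsub>homeo_grp G\<^esub> g \<in> G" using inv_closed[OF g] by (simp add: homeo_grp_def)
  show "g \<circ> inv\<^bsub>homeo_grp G\<^esub> g = id" using r_inv[OF g] by (simp add: homeo_grp_def)
  show "inv\<^bsub>homeo_grp G\<^esub> g \<circ> g = id" using l_inv[OF g] by (simp add: homeo_grp_def)
qed

lemma grp_comp:
  assumes "group (homeo_grp G)" "f \<in> G" "g \<in> G"
  shows "f \<circ> g \<in> G"
proof -
  interpret group "homeo_grp G" by fact
  show ?thesis using m_closed[of f g] assms by (simp add: homeo_grp_def)
qed

lemma grp_id:
  assumes "group (homeo_grp G)" shows "id \<in> G"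
proof -
  interpret group "homeo_grp G" by fact
  show ?thesis using one_closed by (simp add: homeo_grp_def)
qed

lemma PL_range: "PL_homeo f \<Longrightarrow> x \<in> {0..1} \<Longrightarrow> f x \<in> {0..1}"
  unfolding PL_homeo_def
  by (metis atLeastAtMost_iff order.refl strict_mono_on_leD zero_le_one)

lemma PL_inj: assumes "PL_homeo f" shows "inj f"
proof (rule injI)
  fix x y assume e: "f x = f y"
  have sm: "strict_mono_on {0..1} f" and out: "\<forall>x. x \<notin> {0..1} \<longrightarrow> f x = x"
    using assms unfolding PL_homeo_def by auto
  show "x = y"
  proof (cases "x \<in> {0..1}")
    case True
    then show ?thesis
    proof (cases "y \<in> {0..1}")
      case True
      then show ?thesis using \<open>x \<in> {0..1}\<close> e sm
        by (metis linorder_neq_iff order_less_irrefl strict_mono_onD)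
    next
      case False
      then show ?thesis using PL_range[OF assms True] e out by auto
    qed
  next
    case False
    then show ?thesis using out e PL_range[OF assms, of y] by (cases "y \<in> {0..1}") auto
  qed
qed

definition L0 :: "(real \<Rightarrow> real) \<Rightarrow> real \<Rightarrow> bool" where
  "L0 f m \<longleftrightarrow> (\<exists>d>0. \<forall>x\<in>{0..d}. f x = m * x)"
definition L1 :: "(real \<Rightarrow> real) \<Rightarrow> real \<Rightarrow> bool" where
  "L1 f m \<longleftrightarrow> (\<exists>d>0. \<forall>x\<in>{1-d..1}. f x = 1 + m * (x - 1))"

lemma L0_comp:
  assumes "L0 f m" "L0 g n" "n > 0" shows "L0 (f \<circ> g) (m * n)"
proof -
  obtain d1 where d1: "d1 > 0" "\<forall>x\<in>{0..d1}. f x = m * x" using assms(1) L0_def by auto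
  obtain d2 where d2: "d2 > 0" "\<forall>x\<in>{0..d2}. g x = n * x" using assms(2) L0_def by auto
  define d where "d = min d2 (d1 / n)"
  have "d > 0" using d1 d2 assms(3) by (simp add: d_def)
  moreover have "\<forall>x\<in>{0..d}. (f \<circ> g) x = (m * n) * x"
  proof
    fix x assume x: "x \<in> {0..d}"
    then have gx: "g x = n * x" using d2 by (auto simp: d_def)
    have "n * x \<le> d1" using x assms(3) by (auto simp: d_def field_simps)
    then have "f (n * x) = m * (n * x)" using d1 x assms(3) by auto
    then show "(f \<circ> g) x = (m * n) * x" using gx by simp
  qed
  ultimately show ?thesis unfolding L0_def by blast
qed

lemma L0_inv:
  assumes "L0 f m" "m > 0" "fi \<circ> f = id" shows "L0 fi (1 / m)"
proof -
  obtain d1 where d1: "d1 > 0" "\<forall>x\<in>{0..d1}. f x = m * x" using assms(1) L0_def by auto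
  have "\<forall>x\<in>{0..m*d1}. fi x = (1/m) * x"
  proof
    fix x assume x: "x \<in> {0..m*d1}"
    then have "x / m \<in> {0..d1}" using assms(2) by (auto simp: field_simps)
    then have "f (x / m) = x" using d1 assms(2) by auto
    then have "fi x = fi (f (x / m))" by simp
    also have "\<dots> = x / m" using assms(3) by (metis comp_apply id_apply)
    finally show "fi x = (1/m) * x" by simp
  qed
  moreover have "m * d1 > 0" using d1 assms(2) by simp
  ultimately show ?thesis unfolding L0_def by blast
qed

lemma L1_comp:
  assumes "L1 f m" "L1 g n" "n > 0" shows "L1 (f \<circ> g) (m * n)"
proof -
  obtain d1 where d1: "d1 > 0" "\<forall>x\<in>{1-d1..1}. f x = 1 + m * (x - 1)" using assms(1) L1_def by auto
  obtain d2 where d2: "d2 > 0" "\<forall>x\<in>{1-d2..1}. g x = 1 + n * (x - 1)" using assms(2) L1_def by auto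
  define d where "d = min d2 (d1 / n)"
  have "d > 0" using d1 d2 assms(3) by (simp add: d_def)
  moreover have "\<forall>x\<in>{1-d..1}. (f \<circ> g) x = 1 + (m * n) * (x - 1)"
  proof
    fix x assume x: "x \<in> {1-d..1}"
    then have gx: "g x = 1 + n * (x - 1)" using d2 by (auto simp: d_def)
    have "1 - x \<le> d1 / n" using x by (auto simp: d_def)
    then have "n * (1 - x) \<le> d1" using assms(3) by (simp add: field_simps)
    moreover have "n * (1 - x) \<ge> 0" using x assms(3) by auto
    ultimately have "1 + n * (x - 1) \<in> {1-d1..1}" by (auto simp: algebra_simps)
    then have "f (1 + n * (x - 1)) = 1 + m * (n * (x - 1))" using d1 by auto
    then show "(f \<circ> g) x = 1 + (m * n) * (x - 1)" using gx by simp
  qed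
  ultimately show ?thesis unfolding L1_def by blast
qed

lemma L1_inv:
  assumes "L1 f m" "m > 0" "fi \<circ> f = id" shows "L1 fi (1 / m)"
proof -
  obtain d1 where d1: "d1 > 0" "\<forall>x\<in>{1-d1..1}. f x = 1 + m * (x - 1)" using assms(1) L1_def by auto
  have "\<forall>x\<in>{1-m*d1..1}. fi x = 1 + (1/m) * (x - 1)"
  proof
    fix x assume x: "x \<in> {1-m*d1..1}"
    let ?y = "1 + (x - 1) / m"
    have "?y \<in> {1-d1..1}" using x assms(2) by (auto simp: field_simps)
    then have "f ?y = x" using d1 assms(2) by auto
    then have "fi x = fi (f ?y)" by simp
    also have "\<dots> = ?y" using assms(3) by (metis comp_apply id_apply)
    finally show "fi x = 1 + (1/m) * (x - 1)" by simp
  qed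
  moreover have "m * d1 > 0" using d1 assms(2) by simp
  ultimately show ?thesis unfolding L1_def by blast
qed

lemma PL_L0: assumes "PL_homeo f" shows "\<exists>m>0. L0 f m"
proof -
  obtain S where S: "finite S" "{0,1} \<subseteq> S" "S \<subseteq> {0..1}"
    "\<forall>a\<in>S. \<forall>b\<in>S. a < b \<and> {a<..<b} \<inter> S = {} \<longrightarrow> (\<exists>m c. \<forall>x\<in>{a..b}. f x = m * x + c)"
    using assms unfolding PL_homeo_def by blast
  have f0: "f 0 = 0" and sm: "strict_mono_on {0..1} f" using assms unfolding PL_homeo_def by auto
  define a where "a = Min (S - {0})"
  have ne: "S - {0} \<noteq> {}" using S(2) by auto
  have aS: "a \<in> S - {0}" using Min_in[OF _ ne] S(1) by (simp add: a_def)
  have apos: "a > 0" using aS S(3) by force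
  have "{0<..<a} \<inter> S = {}"
  proof (rule ccontr)
    assume "{0<..<a} \<inter> S \<noteq> {}"
    then obtain y where "y \<in> S" "0 < y" "y < a" by auto
    then have "a \<le> y" using Min_le[of "S - {0}" y] S(1) by (simp add: a_def)
    then show False using \<open>y < a\<close> by simp
  qed
  then obtain m c where mc: "\<forall>x\<in>{0..a}. f x = m * x + c" using S(4) aS S(2) apos by blast
  have c0: "c = 0" using mc f0 apos by (metis atLeastAtMost_iff less_eq_real_def mult_zero_right add_0 order_refl)
  have a1: "a \<le> 1" using aS S(3) by auto
  have "f 0 < f a" using sm apos a1 by (intro strict_mono_onD[OF sm]) auto
  then have "m * a > 0" using mc c0 f0 apos by auto
  then have "m > 0" using apos by (simp add: zero_less_mult_iff)
  moreover have "L0 f m" unfolding L0_def using mc c0 apos by auto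
  ultimately show ?thesis by blast
qed

lemma PL_L1: assumes "PL_homeo f" shows "\<exists>m>0. L1 f m"
proof -
  obtain S where S: "finite S" "{0,1} \<subseteq> S" "S \<subseteq> {0..1}"
    "\<forall>a\<in>S. \<forall>b\<in>S. a < b \<and> {a<..<b} \<inter> S = {} \<longrightarrow> (\<exists>m c. \<forall>x\<in>{a..b}. f x = m * x + c)"
    using assms unfolding PL_homeo_def by blast
  have f1: "f 1 = 1" and sm: "strict_mono_on {0..1} f" using assms unfolding PL_homeo_def by auto
  define a where "a = Max (S - {1})"
  have ne: "S - {1} \<noteq> {}" using S(2) by auto
  have aS: "a \<in> S - {1}" using Max_in[OF _ ne] S(1) by (simp add: a_def)
  have apos: "a < 1" "a \<ge> 0" using aS S(3) by force+
  have "{a<..<1} \<inter> S = {}"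
  proof (rule ccontr)
    assume "{a<..<1} \<inter> S \<noteq> {}"
    then obtain y where "y \<in> S" "a < y" "y < 1" by auto
    then have "y \<le> a" using Max_ge[of "S - {1}" y] S(1) by (simp add: a_def)
    then show False using \<open>a < y\<close> by simp
  qed
  then obtain m c where mc: "\<forall>x\<in>{a..1}. f x = m * x + c" using S(4) aS S(2) apos by blast
  have c0: "c = 1 - m" using mc[rule_format, of 1] f1 apos by auto
  have "f a < f 1" using sm apos by (intro strict_mono_onD[OF sm]) auto
  then have "m * (1 - a) > 0" using mc c0 f1 apos by (auto simp: algebra_simps)
  then have "m > 0" using apos by (simp add: zero_less_mult_iff)
  moreover have "L1 f m" unfolding L1_def
    using mc c0 apos by (intro exI[of _ "1 - a"]) (auto simp: algebra_simps)
  ultimately show ?thesis by blast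
qed

definition Zd :: "real \<Rightarrow> (real \<Rightarrow> real) \<Rightarrow> bool" where
  "Zd d f \<longleftrightarrow> (\<forall>x. (x \<le> d \<or> x \<ge> 1 - d) \<longrightarrow> f x = x)"

lemma Zd_mono: "Zd d f \<Longrightarrow> d' \<le> d \<Longrightarrow> Zd d' f"
  unfolding Zd_def by force

lemma Zd_comp: "Zd d f \<Longrightarrow> Zd d g \<Longrightarrow> Zd d (f \<circ> g)"
  unfolding Zd_def by simp

lemma Zd_inv: "Zd d f \<Longrightarrow> fi \<circ> f = id \<Longrightarrow> Zd d fi"
  unfolding Zd_def by (metis comp_apply id_apply)

lemma Zd_id: "Zd d id"
  unfolding Zd_def by simp

lemma Zd_from_L:
  assumes "PL_homeo c" "L0 c 1" "L1 c 1" shows "\<exists>d>0. Zd d c"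
proof -
  obtain d0 where d0: "d0 > 0" "\<forall>x\<in>{0..d0}. c x = x" using assms(2) L0_def by auto
  obtain d1 where d1: "d1 > 0" "\<forall>x\<in>{1-d1..1}. c x = x" using assms(3) L1_def by auto
  have out: "\<forall>x. x \<notin> {0..1} \<longrightarrow> c x = x" using assms(1) PL_homeo_def by auto
  have "Zd (min d0 d1) c" unfolding Zd_def
  proof (intro allI impI)
    fix x assume "x \<le> min d0 d1 \<or> 1 - min d0 d1 \<le> x"
    then show "c x = x" using d0 d1 out
      by (cases "x \<in> {0..1}") (auto simp: min_def split: if_splits)
  qed
  then show ?thesis using d0 d1 by (intro exI[of _ "min d0 d1"]) auto
qed

lemma commutator_Zd:
  assumes gr: "group (homeo_grp G)" and pl: "\<forall>f\<in>G. PL_homeo f" and h: "h1 \<in> G" "h2 \<in> G"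
  shows "\<exists>d>0. Zd d (h1 \<circ> h2 \<circ> inv\<^bsub>homeo_grp G\<^esub> h1 \<circ> inv\<^bsub>homeo_grp G\<^esub> h2)"
proof -
  let ?i1 = "inv\<^bsub>homeo_grp G\<^esub> h1" and ?i2 = "inv\<^bsub>homeo_grp G\<^esub> h2"
  have c: "h1 \<circ> h2 \<circ> ?i1 \<circ> ?i2 \<in> G"
    using grp_comp[OF gr] grp_inv[OF gr] h by meson
  obtain m1 where m1: "m1 > 0" "L0 h1 m1" using PL_L0 pl h by blast
  obtain m2 where m2: "m2 > 0" "L0 h2 m2" using PL_L0 pl h by blast
  have i1: "L0 ?i1 (1/m1)" using L0_inv[OF m1(2) m1(1)] grp_inv[OF gr h(1)] by simp
  have i2: "L0 ?i2 (1/m2)" using L0_inv[OF m2(2) m2(1)] grp_inv[OF gr h(2)] by simp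
  have "L0 (h1 \<circ> h2 \<circ> ?i1 \<circ> ?i2) (m1 * m2 * (1/m1) * (1/m2))"
    using L0_comp[OF L0_comp[OF L0_comp[OF m1(2) m2(2) m2(1)] i1] i2] m1 m2 by simp
  then have A: "L0 (h1 \<circ> h2 \<circ> ?i1 \<circ> ?i2) 1" using m1 m2 by simp
  obtain n1 where n1: "n1 > 0" "L1 h1 n1" using PL_L1 pl h by blast
  obtain n2 where n2: "n2 > 0" "L1 h2 n2" using PL_L1 pl h by blast
  have j1: "L1 ?i1 (1/n1)" using L1_inv[OF n1(2) n1(1)] grp_inv[OF gr h(1)] by simp
  have j2: "L1 ?i2 (1/n2)" using L1_inv[OF n2(2) n2(1)] grp_inv[OF gr h(2)] by simp
  have "L1 (h1 \<circ> h2 \<circ> ?i1 \<circ> ?i2) (n1 * n2 * (1/n1) * (1/n2))"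
    using L1_comp[OF L1_comp[OF L1_comp[OF n1(2) n2(2) n2(1)] j1] j2] n1 n2 by simp
  then have B: "L1 (h1 \<circ> h2 \<circ> ?i1 \<circ> ?i2) 1" using n1 n2 by simp
  show ?thesis using Zd_from_L[OF _ A B] pl c by blast
qed

lemma generate_Zd:
  assumes gr: "group (homeo_grp G)" and S: "S \<subseteq> G" "\<forall>s\<in>S. Zd d s"
    and f: "f \<in> generate (homeo_grp G) S"
  shows "Zd d f"
  using f
proof (induction rule: generate.induct)
  case one
  then show ?case by (simp add: homeo_grp_def Zd_def)
next
  case (incl h)
  then show ?case using S by auto
next
  case (inv h)
  then show ?case using S grp_inv[OF gr, of h] Zd_inv by blast
next
  case (eng h1 h2)
  then show ?case by (simp add: homeo_grp_def Zd_def)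
qed

lemma derived_Zd:
  assumes gr: "group (homeo_grp G)" and pl: "\<forall>f\<in>G. PL_homeo f"
    and f: "f \<in> derived (homeo_grp G) G"
  shows "\<exists>d>0. Zd d f"
  using f unfolding derived_def
proof (induction rule: generate.induct)
  case one
  then show ?case by (auto simp add: homeo_grp_def Zd_def intro: exI[of _ 1])
next
  case (incl h)
  then show ?case using commutator_Zd[OF gr pl] by (auto simp: homeo_grp_def)
next
  case (inv h)
  then obtain h1 h2 where hh: "h1 \<in> G" "h2 \<in> G"
    "h = h1 \<otimes>\<^bsub>homeo_grp G\<^esub> h2 \<otimes>\<^bsub>homeo_grp G\<^esub> inv\<^bsub>homeo_grp G\<^esub> h1 \<otimes>\<^bsub>homeo_grp G\<^esub> inv\<^bsub>homeo_grp G\<^esub> h2"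
    by blast
  have hG: "h \<in> G" using hh grp_comp[OF gr] grp_inv[OF gr] by (simp add: homeo_grp_def)
  obtain d where "d > 0" "Zd d h" using commutator_Zd[OF gr pl hh(1,2)] hh(3) by (auto simp: homeo_grp_def)
  then show ?case using Zd_inv grp_inv(3)[OF gr hG] by blast
next
  case (eng h1 h2)
  then obtain d1 d2 where "d1 > 0" "Zd d1 h1" "d2 > 0" "Zd d2 h2" by blast
  then have "Zd (min d1 d2) h1" "Zd (min d1 d2) h2" using Zd_mono by auto
  then show ?case using \<open>d1 > 0\<close> \<open>d2 > 0\<close>
    by (intro exI[of _ "min d1 d2"]) (simp add: homeo_grp_def Zd_def)
qed

lemma finite_Zd:
  assumes "finite S" "\<forall>s\<in>S. \<exists>d>0. Zd d s"
  shows "\<exists>d>0. \<forall>s\<in>S. Zd d s"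
  using assms
proof (induction S rule: finite_induct)
  case empty
  then show ?case by (auto intro: exI[of _ 1])
next
  case (insert x F)
  then obtain d1 where d1: "d1 > 0" "\<forall>s\<in>F. Zd d1 s" by auto
  obtain d2 where d2: "d2 > 0" "Zd d2 x" using insert by auto
  show ?case using d1 d2 Zd_mono[of _ _ "min d1 d2"]
    by (intro exI[of _ "min d1 d2"]) auto
qed

lemma PL_out: "PL_homeo f \<Longrightarrow> x \<notin> {0..1} \<Longrightarrow> f x = x"
  unfolding PL_homeo_def by blast
lemma PL_sm: "PL_homeo f \<Longrightarrow> strict_mono_on {0..1} f"
  unfolding PL_homeo_def by blast
lemma PL_cont: "PL_homeo f \<Longrightarrow> continuous_on {0..1} f"
  unfolding PL_homeo_def by blast
lemma PLT_parts: "PLT_group G \<Longrightarrow> group (homeo_grp G)"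
  "PLT_group G \<Longrightarrow> \<forall>f\<in>G. PL_homeo f"
  "PLT_group G \<Longrightarrow> \<forall>t\<in>{0<..<1}. \<exists>g\<in>G. g t \<noteq> t"
  unfolding PLT_group_def by blast+

lemma orbit_small:
  assumes P: "PLT_group G" and b: "0 < b" "b < 1" and e: "e > 0"
  shows "\<exists>g\<in>G. g b < e"
proof (rule ccontr)
  assume "\<not> ?thesis"
  then have ge: "\<forall>g\<in>G. e \<le> g b" using not_less by blast
  have gr: "group (homeo_grp G)" and pl: "\<forall>f\<in>G. PL_homeo f"
    and nf: "\<forall>t\<in>{0<..<1}. \<exists>g\<in>G. g t \<noteq> t" using PLT_parts[OF P] by auto
  define Orb where "Orb = (\<lambda>g. g b) ` G"
  define s where "s = Inf Orb"
  have idG: "id \<in> G" using grp_id[OF gr] .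
  have Orbne: "Orb \<noteq> {}" using idG Orb_def by auto
  have gb01: "g b \<in> {0..1}" if "g \<in> G" for g
    using PL_range[OF pl[rule_format, OF that], of b] b by (simp add: atLeastAtMost_iff)
  have bdd: "bdd_below Orb" unfolding Orb_def
    by (rule bdd_belowI[of _ 0]) (use gb01 in auto)
  have se: "s \<ge> e" unfolding s_def
    by (rule cInf_greatest[OF Orbne]) (use ge in \<open>auto simp: Orb_def\<close>)
  have bO: "b \<in> Orb" unfolding Orb_def using rev_image_eqI[OF idG, of b "\<lambda>g. g b"] by simp
  have sb: "s \<le> b" unfolding s_def using cInf_lower[OF bO bdd] .
  have sO: "\<And>p. p \<in> Orb \<Longrightarrow> s \<le> p" unfolding s_def using bdd by (simp add: cInf_lower)
  have s01: "s \<in> {0..1}" using se sb e b by auto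
  have key: "\<not> h s < s" if h: "h \<in> G" for h
  proof
    assume hs: "h s < s"
    have cont: "continuous_on {0..1} h" using pl h PL_cont by auto
    obtain d where d: "d > 0" "\<forall>x\<in>{0..1}. dist x s < d \<longrightarrow> dist (h x) (h s) < s - h s"
      using cont s01 hs unfolding continuous_on_iff by (meson diff_gt_0_iff_gt)
    have "Inf Orb < s + d" using d s_def by simp
    then obtain p where p: "p \<in> Orb" "p < s + d" using cInf_lessD[OF Orbne] by blast
    then obtain g where g: "g \<in> G" "p = g b" using Orb_def by auto
    have p01: "p \<in> {0..1}" using g gb01 by simp
    have "dist p s < d" using p sO[OF p(1)] d by (simp add: dist_real_def)
    then have "dist (h p) (h s) < s - h s" using d p01 by auto
    then have "h p < s" by (simp add: dist_real_def)
    moreover have "h p \<in> Orb" unfolding Orb_def g(2)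
      using rev_image_eqI[OF grp_comp[OF gr h g(1)], of "h (g b)" "\<lambda>g. g b"] by simp
    ultimately show False using sO[of "h p"] by linarith
  qed
  have "s \<in> {0<..<1}" using se e sb b by simp
  then obtain h where h: "h \<in> G" "h s \<noteq> s" using nf by blast
  let ?hi = "inv\<^bsub>homeo_grp G\<^esub> h"
  have hiG: "?hi \<in> G" and hhi: "h \<circ> ?hi = id" using grp_inv[OF gr h(1)] by auto
  have "h s \<ge> s" using key[OF h(1)] by simp
  moreover have "?hi s \<ge> s" using key[OF hiG] by simp
  moreover have "?hi s \<in> {0..1}" using PL_range pl hiG s01 by auto
  moreover have sm: "strict_mono_on {0..1} h" using pl h PL_sm by auto
  ultimately have "h s \<le> h (?hi s)" using s01 strict_mono_on_leD[OF sm, of s "?hi s"] by simp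
  also have "h (?hi s) = s" using hhi by (metis comp_apply id_apply)
  finally show False using \<open>h s \<ge> s\<close> h(2) by simp
qed

theorem lemma4p5:
  fixes G A B :: "(real \<Rightarrow> real) set"
  assumes "PLT_group G"
    and "\<exists>S. finite S \<and> S \<subseteq> derived (homeo_grp G) G \<and> A = generate (homeo_grp G) S"
    and "\<exists>T. finite T \<and> T \<subseteq> derived (homeo_grp G) G \<and> B = generate (homeo_grp G) T"
  shows "\<exists>g\<in>G. \<forall>a\<in>conj_set G A g. \<forall>b\<in>B. a \<circ> b = b \<circ> a"
proof -
  have gr: "group (homeo_grp G)" and pl: "\<forall>f\<in>G. PL_homeo f" using PLT_parts[OF assms(1)] by auto
  obtain S where S: "finite S" "S \<subseteq> derived (homeo_grp G) G" "A = generate (homeo_grp G) S"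
    using assms(2) by blast
  obtain T where T: "finite T" "T \<subseteq> derived (homeo_grp G) G" "B = generate (homeo_grp G) T"
    using assms(3) by blast
  have derG: "derived (homeo_grp G) G \<subseteq> G"
    using group.derived_in_carrier[OF gr] by (simp add: homeo_grp_def)
  obtain d1 where d1: "d1 > 0" "\<forall>s\<in>S. Zd d1 s"
    using finite_Zd[OF S(1)] derived_Zd[OF gr pl] S(2) by blast
  obtain d2 where d2: "d2 > 0" "\<forall>s\<in>T. Zd d2 s"
    using finite_Zd[OF T(1)] derived_Zd[OF gr pl] T(2) by blast
  define d where "d = min (min d1 d2) (1/2)"
  have dpos: "d > 0" "d \<le> 1/2" using d1 d2 by (auto simp: d_def)
  have ZA: "\<forall>a\<in>A. Zd d a" using generate_Zd[OF gr, of S d] S derG d1 Zd_mono[of d1 _ d]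
    by (auto simp: d_def)
  have ZB: "\<forall>a\<in>B. Zd d a" using generate_Zd[OF gr, of T d] T derG d2 Zd_mono[of d2 _ d]
    by (auto simp: d_def)
  have AG: "A \<subseteq> G" using group.generate_in_carrier[OF gr, of S] S derG by (auto simp: homeo_grp_def)
  have BG: "B \<subseteq> G" using group.generate_in_carrier[OF gr, of T] T derG by (auto simp: homeo_grp_def)
  obtain g where g: "g \<in> G" "g (1 - d) < d" using orbit_small[OF assms(1), of "1 - d" d] dpos by auto
  let ?gi = "inv\<^bsub>homeo_grp G\<^esub> g"
  have giG: "?gi \<in> G" and ggi: "g \<circ> ?gi = id" using grp_inv[OF gr g(1)] by auto
  have smg: "strict_mono_on {0..1} g" using pl g PL_sm by auto
  have gi_big: "?gi y \<ge> 1 - d" if y: "y \<ge> d" for y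
  proof (cases "y > 1")
    case True
    then have "?gi y = y" using pl giG PL_out by auto
    then show ?thesis using True dpos by simp
  next
    case False
    then have y01: "y \<in> {0..1}" using y dpos by auto
    then have gy: "?gi y \<in> {0..1}" using PL_range pl giG by auto
    show ?thesis
    proof (rule ccontr)
      assume "\<not> ?thesis"
      then have "g (?gi y) < g (1 - d)" using gy dpos by (intro strict_mono_onD[OF smg]) auto
      moreover have "g (?gi y) = y" using ggi by (metis comp_apply id_apply)
      ultimately show False using g(2) y by simp
    qed
  qed
  have "\<forall>c\<in>conj_set G A g. \<forall>b\<in>B. c \<circ> b = b \<circ> c"
  proof (intro ballI)
    fix c b assume c: "c \<in> conj_set G A g" and b: "b \<in> B"
    then obtain a where a: "a \<in> A" "c = g \<circ> a \<circ> ?gi" unfolding conj_set_def by auto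
    have cG: "c \<in> G" using a AG g giG grp_comp[OF gr] by auto
    have injc: "inj c" using PL_inj pl cG by auto
    have injb: "inj b" using PL_inj pl BG b by auto
    have cfix: "c y = y" if "y \<ge> d" for y
    proof -
      have "a (?gi y) = ?gi y" using ZA a(1) gi_big[OF that] unfolding Zd_def by auto
      then show ?thesis using a(2) ggi by (metis comp_apply id_apply)
    qed
    have bZ: "Zd d b" using ZB b by auto
    show "c \<circ> b = b \<circ> c"
    proof
      fix x
      show "(c \<circ> b) x = (b \<circ> c) x"
      proof (cases "x \<ge> d")
        case True
        have "b x \<ge> d"
        proof (rule ccontr)
          assume "\<not> b x \<ge> d"
          then have "b (b x) = b x" using bZ unfolding Zd_def by auto
          then have "b x = x" using injb by (simp add: inj_eq)
          then show False using True \<open>\<not> b x \<ge> d\<close> by simp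
        qed
        then show ?thesis using cfix True by simp
      next
        case False
        then have bx: "b x = x" using bZ unfolding Zd_def by auto
        have "c x < d"
        proof (rule ccontr)
          assume "\<not> c x < d"
          then have "c (c x) = c x" using cfix by auto
          then have "c x = x" using injc by (simp add: inj_eq)
          then show False using False \<open>\<not> c x < d\<close> by simp
        qed
        then have "b (c x) = c x" using bZ unfolding Zd_def by auto
        then show ?thesis using bx by simp
      qed
    qed
  qed
  then show ?thesis using g(1) by blast
qed

end
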